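(* Let $\mathcal{X}=\mathbb{R}^3$ with the Euclidean topology, partially ordered by the cone $\mathbb{R}^3_+$. There exist a set $\mathcal{A}\subset\mathbb{R}^3$, a linear subspace $\mathcal{M}\subset\mathbb{R}^3$ and a linear functional $\pi:\mathcal{M}\to\mathbb{R}$ such that $(\mathcal{A},\mathcal{M},\pi)$ is admissible (in the sense defined in the context) and the optimal set mapping $E:\mathbb{R}^3\rightrightarrows\mathcal{M}$ fails to be lower semicontinuous at some point $x\in\mathbb{R}^3$, while $E$ nevertheless admits a continuous selection, i.e. there is a continuous map $s:\mathbb{R}^3\to\mathcal{M}$ with $s(x)\in E(x)$ for every $x\in\mathbb{R}^3$.
   Context: Given a set $\mathcal{A}\subset\mathbb{R}^3$ (acceptable positions), a linear subspace $\mathcal{M}\subset\mathbb{R}^3$ (payoffs, with the relative topology) and a linear functional $\pi:\mathcal{M}\to\mathbb{R}$ (price), define the risk measure $\rho:\mathbb{R}^3\to[-\infty,+\infty]$ by $\rho(x)=\inf\{\pi(z)\,;\ z\in\mathcal{M},\ z+x\in\mathcal{A}\}$ and the optimal set mapping $E:\mathbb{R}^3\rightrightarrows\mathcal{M}$ by $E(x)=\{z\in\mathcal{M}\,;\ z+x\in\mathcal{A},\ \pi(z)=\rho(x)\}$. The triple $(\mathcal{A},\mathcal{M},\pi)$ is called admissible if: (R1) $\mathcal{A}$ is closed, convex, contains $0$, and is monotone: $x\in\mathcal{A}$ and $y-x\in\mathbb{R}^3_+$ imply $y\in\mathcal{A}$; (R2) there is no arbitrage: every $z\in\mathcal{M}\cap\mathbb{R}^3_+$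 with $z\neq0$ satisfies $\pi(z)>0$; (R3) $\rho$ is finite-valued and continuous on $\mathbb{R}^3$. The map $E$ is lower semicontinuous at $x$ if for every open set $\mathcal{U}\subset\mathcal{M}$ with $E(x)\cap\mathcal{U}\neq\emptyset$ there is a neighborhood $\mathcal{U}_x$ of $x$ in $\mathbb{R}^3$ such that $E(y)\cap\mathcal{U}\neq\emptyset$ for all $y\in\mathcal{U}_x$. *)

theory Defs
  imports "HOL-Analysis.Analysis"
begin

definition nonneg3 :: "real^3 \<Rightarrow> bool" where
  "nonneg3 x \<longleftrightarrow> (\<forall>i. 0 \<le> x $ i)"

text \<open>A linear functional defined on the subspace M (only its values on M matter).\<close>
definition linear_functional_on :: "(real^3) set \<Rightarrow> (real^3 \<Rightarrow> real) \<Rightarrow> bool" where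
  "linear_functional_on M p \<longleftrightarrow>
     (\<forall>x\<in>M. \<forall>y\<in>M. p (x + y) = p x + p y) \<and> (\<forall>c. \<forall>x\<in>M. p (c *\<^sub>R x) = c * p x)"

definition rho :: "(real^3) set \<Rightarrow> (real^3) set \<Rightarrow> (real^3 \<Rightarrow> real) \<Rightarrow> real^3 \<Rightarrow> ereal" where
  "rho A M p x = Inf {ereal (p z) | z. z \<in> M \<and> z + x \<in> A}"

definition optset :: "(real^3) set \<Rightarrow> (real^3) set \<Rightarrow> (real^3 \<Rightarrow> real) \<Rightarrow> real^3 \<Rightarrow> (real^3) set" where
  "optset A M p x = {z \<in> M. z + x \<in> A \<and> ereal (p z) = rho A M p x}"

definition admissible :: "(real^3) set \<Rightarrow> (real^3) set \<Rightarrow> (real^3 \<Rightarrow> real) \<Rightarrow> bool" where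
  "admissible A M p \<longleftrightarrow>
     subspace M \<and> linear_functional_on M p \<and>
     \<comment> \<open>(R1)\<close>
     closed A \<and> convex A \<and> 0 \<in> A \<and> (\<forall>x y. x \<in> A \<and> nonneg3 (y - x) \<longrightarrow> y \<in> A) \<and>
     \<comment> \<open>(R2)\<close>
     (\<forall>z\<in>M. nonneg3 z \<and> z \<noteq> 0 \<longrightarrow> p z > 0) \<and>
     \<comment> \<open>(R3)\<close>
     (\<forall>x. rho A M p x \<noteq> \<infinity> \<and> rho A M p x \<noteq> -\<infinity>) \<and>
     continuous_on UNIV (\<lambda>x. real_of_ereal (rho A M p x))"

definition lsc_at :: "(real^3) set \<Rightarrow> (real^3 \<Rightarrow> (real^3) set) \<Rightarrow> real^3 \<Rightarrow> bool" where
  "lsc_at M F x \<longleftrightarrow>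
     (\<forall>U. openin (top_of_set M) U \<and> F x \<inter> U \<noteq> {} \<longrightarrow>
        (\<exists>V. open V \<and> x \<in> V \<and> (\<forall>y\<in>V. F y \<inter> U \<noteq> {})))"

end

theory Submission
  imports Defs
begin

definition sg :: "real \<Rightarrow> real" where "sg a = (sqrt (1 + 4*a^2) - 1)/2"

lemma sg_nonneg: "0 \<le> sg a"
  unfolding sg_def by (simp add: real_le_rsqrt)

lemma sg_eq: "sg a * (1 + sg a) = a^2"
proof -
  have h: "(sqrt (1 + 4*a^2))^2 = 1 + 4*a^2" by simp
  show ?thesis unfolding sg_def using h by (simp add: field_simps power2_eq_square)
qed

lemma sg_min: assumes "0 \<le> s" "a^2 \<le> s*(1+s)" shows "sg a \<le> s"
proof (rule ccontr)
  assume "\<not> sg a \<le> s"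
  hence "s < sg a" by simp
  hence "s*(1+s) < sg a * (1 + sg a)" using assms(1)
    by (smt (verit, best) mult_strict_mono)
  thus False using sg_eq[of a] assms(2) by simp
qed

lemma sg_pos: assumes "a \<noteq> 0" shows "0 < sg a"
proof -
  have "0 < a^2" using assms by simp
  hence "sg a \<noteq> 0" using sg_eq[of a] by auto
  thus ?thesis using sg_nonneg[of a] by simp
qed

lemma hyp_conv:
  fixes s1 v1 s2 v2 q1 q2 l m :: real
  assumes "0\<le>s1" "0\<le>v1" "0\<le>s2" "0\<le>v2" "0\<le>q1" "0\<le>q2"
    "q1^2 \<le> s1 * v1" "q2^2 \<le> s2 * v2" "0\<le>l" "0\<le>m"
  shows "(l* q1+m* q2)^2 \<le> (l* s1+m* s2)* (l* v1+m* v2)"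
proof -
  have a1: "q1^2 * q2^2 \<le> (s1 * v1)* (s2 * v2)"
    using assms by (intro mult_mono) auto
  have p: "(q1* q2)^2 \<le> (s1 * v2)* (s2 * v1)"
    using a1 by (simp add: power_mult_distrib algebra_simps)
  have sq: "4* ((s1 * v2)* (s2 * v1)) \<le> (s1 * v2 + s2 * v1)^2"
    using sum_squares_ge_zero[of "s1 * v2 - s2 * v1" 0] by (simp add: power2_eq_square algebra_simps)
  have "(2* (q1* q2))^2 \<le> (s1 * v2 + s2 * v1)^2" using p sq by (simp add: power_mult_distrib)
  moreover have "0 \<le> s1 * v2 + s2 * v1" using assms by simp
  ultimately have k: "2* (q1* q2) \<le> s1 * v2 + s2 * v1"
    by (rule power2_le_imp_le)
  have e1: "(l* q1+m* q2)^2 = l^2* q1^2 + m^2* q2^2 + (l* m)* (2* (q1* q2))" by (simp add: power2_eq_square algebra_simps)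
  have i1: "l^2* q1^2 \<le> l^2* (s1 * v1)" using assms(7) by (rule mult_left_mono) simp
  have i2: "m^2* q2^2 \<le> m^2* (s2 * v2)" using assms(8) by (rule mult_left_mono) simp
  have i3: "(l* m)* (2* (q1* q2)) \<le> (l* m)* (s1 * v2 + s2 * v1)" using k by (rule mult_left_mono) (simp add: assms)
  have e2: "l^2* (s1 * v1) + m^2* (s2 * v2) + (l* m)* (s1 * v2 + s2 * v1) = (l* s1+m* s2)* (l* v1+m* v2)"
    by (simp add: power2_eq_square algebra_simps)
  show ?thesis using e1 e2 i1 i2 i3 by linarith
qed


definition qa :: "real^3 \<Rightarrow> real" where "qa y = max 0 (-(y$3))"

definition AA :: "(real^3) set" where
  "AA = {y. 0 \<le> y$1 \<and> 0 \<le> y$1 + y$2 \<and> 0 \<le> 1 + y$2 \<and> (qa y)^2 \<le> (y$1 + y$2) * (1 + y$2)}"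

definition MM :: "(real^3) set" where "MM = {z. z$3 = 0}"

definition pp :: "real^3 \<Rightarrow> real" where "pp z = z$1 + z$2"

definition rr :: "real^3 \<Rightarrow> real" where "rr x = sg (qa x) - x$1 - x$2"

definition ss :: "real^3 \<Rightarrow> real^3" where
  "ss x = (\<chi> i. if i = 1 then -(x$1) else if i = 2 then sg (qa x) - x$2 else 0)"

lemma qa_nonneg: "0 \<le> qa y" unfolding qa_def by simp

lemma lower: assumes "z \<in> MM" "z + x \<in> AA" shows "rr x \<le> pp z"
proof -
  define y where "y = z + x"
  have y3: "y$3 = x$3" using assms(1) unfolding y_def MM_def by simp
  hence q: "qa y = qa x" unfolding qa_def by simp
  have A: "0 \<le> y$1" "0 \<le> y$1 + y$2" "0 \<le> 1 + y$2" "(qa y)^2 \<le> (y$1 + y$2) * (1 + y$2)"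
    using assms(2) unfolding y_def AA_def by auto
  have "(y$1 + y$2) * (1 + y$2) \<le> (y$1 + y$2) * (1 + (y$1 + y$2))"
    using A by (intro mult_left_mono) auto
  hence "(qa x)^2 \<le> (y$1 + y$2) * (1 + (y$1 + y$2))" using A q by simp
  hence "sg (qa x) \<le> y$1 + y$2" using A by (intro sg_min) auto
  thus ?thesis unfolding rr_def pp_def y_def by simp
qed

lemma ss_props: "ss x \<in> MM" "ss x + x \<in> AA" "pp (ss x) = rr x"
proof -
  show "ss x \<in> MM" unfolding MM_def ss_def by simp
  have q: "qa (ss x + x) = qa x" unfolding qa_def ss_def by simp
  show "ss x + x \<in> AA" unfolding AA_def using q sg_nonneg[of "qa x"] sg_eq[of "qa x"]
    by (simp add: ss_def)
  show "pp (ss x) = rr x" unfolding pp_def rr_def ss_def by simp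
qed

lemma rho_eq: "rho AA MM pp x = ereal (rr x)"
  unfolding rho_def
proof (rule Inf_eqI)
  fix i assume "i \<in> {ereal (pp z) |z. z \<in> MM \<and> z + x \<in> AA}"
  then show "ereal (rr x) \<le> i" using lower by auto
next
  fix y assume "\<And>i. i \<in> {ereal (pp z) |z. z \<in> MM \<and> z + x \<in> AA} \<Longrightarrow> y \<le> i"
  moreover have "ereal (rr x) \<in> {ereal (pp z) |z. z \<in> MM \<and> z + x \<in> AA}"
    using ss_props[of x] by (metis (mono_tags, lifting) mem_Collect_eq)
  ultimately show "y \<le> ereal (rr x)" by blast
qed

lemma ss_opt: "ss x \<in> optset AA MM pp x"
  unfolding optset_def using ss_props[of x] rho_eq[of x] by simp

lemma cont_qa: "continuous_on UNIV qa"
  unfolding qa_def by (intro continuous_intros)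

lemma cont_sg: "continuous_on UNIV sg"
  unfolding sg_def by (intro continuous_intros) auto

lemma cont_sgqa: "continuous_on UNIV (\<lambda>x. sg (qa x))"
  using continuous_on_compose[OF cont_qa, of sg] cont_sg
  by (simp add: comp_def continuous_on_subset)

lemma cont_rr: "continuous_on UNIV rr"
  unfolding rr_def by (intro continuous_intros cont_sgqa)

lemma cont_ss: "continuous_on UNIV ss"
  unfolding ss_def
  apply (rule continuous_on_vec_lambda)
  subgoal for i by (cases "i = 1"; cases "i = 2") (auto intro!: continuous_intros cont_sgqa)
  done


lemma sg0: "sg 0 = 0" unfolding sg_def by simp

lemma monoA: assumes "x \<in> AA" "nonneg3 (y - x)" shows "y \<in> AA"
proof -
  have le: "x$i \<le> y$i" for i using assms(2) unfolding nonneg3_def by (metis diff_ge_0_iff_ge vector_minus_component)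
  have A: "0 \<le> x$1" "0 \<le> x$1 + x$2" "0 \<le> 1 + x$2" "(qa x)^2 \<le> (x$1 + x$2) * (1 + x$2)"
    using assms(1) unfolding AA_def by auto
  have q: "qa y \<le> qa x" unfolding qa_def using le[of 3] by simp
  have q2: "(qa y)^2 \<le> (qa x)^2" using q qa_nonneg[of y] by (intro power_mono) auto
  have m: "(x$1 + x$2) * (1 + x$2) \<le> (y$1 + y$2) * (1 + y$2)"
    using A le[of 1] le[of 2] by (intro mult_mono) auto
  have "0 \<le> y$1" "0 \<le> y$1 + y$2" "0 \<le> 1 + y$2" "(qa y)^2 \<le> (y$1 + y$2) * (1 + y$2)"
    using A le[of 1] le[of 2] q2 m by linarith+
  thus ?thesis unfolding AA_def by blast
qed

lemma convexA: "convex AA"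
  unfolding convex_def
proof (intro ballI allI impI)
  fix x y :: "real^3" and u v :: real
  assume x: "x \<in> AA" and y: "y \<in> AA" and uv: "0 \<le> u" "0 \<le> v" "u + v = 1"
  have X: "0 \<le> x$1" "0 \<le> x$1 + x$2" "0 \<le> 1 + x$2" "(qa x)^2 \<le> (x$1 + x$2) * (1 + x$2)"
    using x unfolding AA_def by auto
  have Y: "0 \<le> y$1" "0 \<le> y$1 + y$2" "0 \<le> 1 + y$2" "(qa y)^2 \<le> (y$1 + y$2) * (1 + y$2)"
    using y unfolding AA_def by auto
  define w where "w = u *\<^sub>R x + v *\<^sub>R y"
  have w: "w$i = u * x$i + v * y$i" for i unfolding w_def by simp
  have q: "qa w \<le> u * qa x + v * qa y"
  proof -
    have a: "u * (- x$3) \<le> u * qa x" using uv(1) by (intro mult_left_mono) (auto simp: qa_def)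
    have b: "v * (- y$3) \<le> v * qa y" using uv(2) by (intro mult_left_mono) (auto simp: qa_def)
    have c: "0 \<le> u * qa x + v * qa y" using uv qa_nonneg[of x] qa_nonneg[of y] by simp
    have "- w$3 \<le> u * qa x + v * qa y" using a b w[of 3] by (simp add: algebra_simps)
    thus ?thesis using c unfolding qa_def by simp
  qed
  have q2: "(qa w)^2 \<le> (u * qa x + v * qa y)^2" using q qa_nonneg[of w] by (intro power_mono) auto
  have h: "(u * qa x + v * qa y)^2 \<le> (u * (x$1 + x$2) + v * (y$1 + y$2)) * (u * (1 + x$2) + v * (1 + y$2))"
    by (rule hyp_conv) (use X Y uv qa_nonneg in auto)
  have e1: "w$1 + w$2 = u * (x$1 + x$2) + v * (y$1 + y$2)" using w[of 1] w[of 2] by (simp add: algebra_simps)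
  have e2: "1 + w$2 = u * (1 + x$2) + v * (1 + y$2)" using w[of 2] uv(3) by (simp add: algebra_simps)
  have c1: "0 \<le> w$1" using w[of 1] X Y uv by simp
  have c2: "0 \<le> w$1 + w$2" using e1 X Y uv by simp
  have c3: "0 \<le> 1 + w$2" using e2 X Y uv by simp
  show "u *\<^sub>R x + v *\<^sub>R y \<in> AA"
  proof -
    have "(qa w)^2 \<le> (w$1 + w$2) * (1 + w$2)" using q2 h e1 e2 by simp
    thus ?thesis using c1 c2 c3 unfolding w_def[symmetric] AA_def by blast
  qed
qed

lemma closedA: "closed AA"
proof -
  have e: "AA = (({y. 0 \<le> y$1} \<inter> {y. 0 \<le> y$1 + y$2}) \<inter> {y. 0 \<le> 1 + y$2}) \<inter> {y. (qa y)^2 \<le> (y$1 + y$2) * (1 + y$2)}"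
    unfolding AA_def by blast
  have cf: "continuous_on UNIV (\<lambda>y::real^3. (qa y)^2)" by (rule continuous_on_power[OF cont_qa])
  have cg: "continuous_on UNIV (\<lambda>y::real^3. (y$1 + y$2) * (1 + y$2))"
    by (intro continuous_on_mult continuous_on_add continuous_on_const continuous_on_component continuous_on_id)
  have c4: "closed {y::real^3. (qa y)^2 \<le> (y$1 + y$2) * (1 + y$2)}"
    by (rule closed_Collect_le[OF cf cg])
  have c1: "closed {y::real^3. 0 \<le> y$1}"
    by (rule closed_Collect_le) (intro continuous_on_const continuous_on_component continuous_on_id)+
  have c2: "closed {y::real^3. 0 \<le> y$1 + y$2}"
    by (rule closed_Collect_le) (intro continuous_on_const continuous_on_add continuous_on_component continuous_on_id)+
  have c3: "closed {y::real^3. 0 \<le> 1 + y$2}"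
    by (rule closed_Collect_le) (intro continuous_on_const continuous_on_add continuous_on_component continuous_on_id)+
  show ?thesis unfolding e by (intro closed_Int c1 c2 c3 c4)
qed

lemma admissibleA: "admissible AA MM pp"
  unfolding admissible_def
proof (intro conjI)
  show "subspace MM" unfolding subspace_def MM_def by simp
  show "linear_functional_on MM pp" unfolding linear_functional_on_def pp_def by (simp add: distrib_left)
  show "closed AA" by (rule closedA)
  show "convex AA" by (rule convexA)
  show "0 \<in> AA" unfolding AA_def qa_def by simp
  show "\<forall>x y. x \<in> AA \<and> nonneg3 (y - x) \<longrightarrow> y \<in> AA" using monoA by blast
  show "\<forall>z\<in>MM. nonneg3 z \<and> z \<noteq> 0 \<longrightarrow> 0 < pp z"
  proof (intro ballI impI)
    fix z assume z: "z \<in> MM" "nonneg3 z \<and> z \<noteq> 0"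
    have "z$3 = 0" using z unfolding MM_def by simp
    moreover have "0 \<le> z$1" "0 \<le> z$2" using z unfolding nonneg3_def by auto
    moreover have "z$1 \<noteq> 0 \<or> z$2 \<noteq> 0"
    proof (rule ccontr)
      assume "\<not> ?thesis"
      hence "z = 0" using \<open>z$3 = 0\<close> by (simp add: vec_eq_iff forall_3)
      thus False using z by simp
    qed
    ultimately show "0 < pp z" unfolding pp_def by auto
  qed
  show "\<forall>x. rho AA MM pp x \<noteq> \<infinity> \<and> rho AA MM pp x \<noteq> - \<infinity>" by (simp add: rho_eq)
  show "continuous_on UNIV (\<lambda>x. real_of_ereal (rho AA MM pp x))" by (simp add: rho_eq cont_rr)
qed


lemma not_lsc: "\<not> lsc_at MM (optset AA MM pp) 0"
proof
  assume L: "lsc_at MM (optset AA MM pp) 0"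
  define z0 :: "real^3" where "z0 = (\<chi> i. if i = 1 then 1/2 else if i = 2 then -1/2 else 0)"
  have z01: "z0$1 = 1/2" and z02: "z0$2 = -1/2" and z03: "z0$3 = 0" unfolding z0_def by simp_all
  define U where "U = MM \<inter> ball z0 (1/4)"
  have oU: "openin (top_of_set MM) U" unfolding U_def by (rule openin_open_Int) simp
  have "z0 \<in> optset AA MM pp 0"
  proof -
    have "z0 \<in> MM" unfolding MM_def using z03 by simp
    moreover have "z0 + 0 \<in> AA" unfolding AA_def qa_def using z01 z02 z03 by simp
    moreover have "ereal (pp z0) = rho AA MM pp 0" unfolding rho_eq rr_def pp_def qa_def
      using z01 z02 sg0 by simp
    ultimately show ?thesis unfolding optset_def by simp
  qed
  hence "optset AA MM pp 0 \<inter> U \<noteq> {}" unfolding U_def using \<open>z0 \<in> optset AA MM pp 0\<close>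
    by (auto simp: optset_def)
  then obtain V where V: "open V" "0 \<in> V" "\<forall>y\<in>V. optset AA MM pp y \<inter> U \<noteq> {}"
    using L oU unfolding lsc_at_def by blast
  obtain e where e: "e > 0" "ball 0 e \<subseteq> V" using V(1,2) open_contains_ball by blast
  define y :: "real^3" where "y = (\<chi> i. if i = 3 then -(e/2) else 0)"
  have y1: "y$1 = 0" and y2: "y$2 = 0" and y3: "y$3 = -(e/2)" unfolding y_def by simp_all
  have "norm y \<le> e/2"
  proof -
    have "norm y \<le> (\<Sum>i\<in>UNIV. \<bar>y$i\<bar>)" by (rule norm_le_l1_cart)
    also have "\<dots> = e/2" using y1 y2 y3 e(1) by (simp add: sum_3)
    finally show ?thesis .
  qed
  hence "y \<in> V" using e by (auto simp: dist_norm)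
  then obtain z where z: "z \<in> optset AA MM pp y" "z \<in> U" using V(3) by blast
  have zM: "z$3 = 0" using z(1) unfolding optset_def MM_def by simp
  have zA: "z + y \<in> AA" using z(1) unfolding optset_def by simp
  have zp: "pp z = rr y" using z(1) unfolding optset_def rho_eq by simp
  have qy: "qa y = e/2" unfolding qa_def using y3 e(1) by simp
  have qzy: "qa (z + y) = e/2" unfolding qa_def using y3 zM e(1) by simp
  define sig where "sig = sg (e/2)"
  have sp: "0 < sig" unfolding sig_def using sg_pos[of "e/2"] e(1) by simp
  have se: "sig * (1 + sig) = (e/2)^2" unfolding sig_def by (rule sg_eq)
  have sum: "z$1 + z$2 = sig" using zp unfolding pp_def rr_def qy sig_def using y1 y2 by simp
  have A: "0 \<le> z$1" "(e/2)^2 \<le> sig * (1 + z$2)"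
    using zA qzy sum y1 y2 unfolding AA_def by auto
  have "sig * (1 + sig) \<le> sig * (1 + z$2)" using A(2) se by simp
  hence "1 + sig \<le> 1 + z$2" using sp by simp
  hence "z$1 = 0" using sum A(1) by simp
  moreover have "dist z0 z < 1/4" using z(2) unfolding U_def by simp
  moreover have "\<bar>(z0 - z)$1\<bar> \<le> norm (z0 - z)" by (rule component_le_norm_cart)
  ultimately show False using z01 by (simp add: dist_norm)
qed

theorem mainTheorem1:
  shows "\<exists>(A :: (real^3) set) (M :: (real^3) set) (p :: real^3 \<Rightarrow> real).
           admissible A M p \<and>
           (\<exists>x. \<not> lsc_at M (optset A M p) x) \<and>
           (\<exists>s :: real^3 \<Rightarrow> real^3. continuous_on UNIV s \<and> (\<forall>x. s x \<in> optset A M p x))"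
  using admissibleA not_lsc cont_ss ss_opt by blast

end
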